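(* Let $f:\mathbb{N}\to\mathbb{R}$ with $f(1)=1$. Assume there exist $C>0$ and $\gamma\in\mathbb{R}$ such that $|f(n)|\leq Cn^\gamma$ for all $n\geq2$. Then $$|f^{-1}(n)|\leq n^{\gamma+\varsigma}, \quad n\geq2,$$ where $\varsigma>1$ is the unique real root of $\zeta(s)=\frac{1}{C}+1$.
   Context: $f^{-1}$ denotes the Dirichlet inverse of $f$: the arithmetic function with $\sum_{d\mid n} f(n/d) f^{-1}(d)=\varepsilon(n)$ for all $n$, where $\varepsilon(1)=1$ and $\varepsilon(n)=0$ for $n\ge2$. $\zeta$ is the Riemann zeta function. *)

theory Defs
  imports "HOL-Analysis.Analysis"
begin

text \<open>Arithmetic functions are functions nat => real; the value at 0 is irrelevant.
  g is a Dirichlet inverse of f iff sum over d dividing n of f(n/d) g(d) = epsilon(n) for all n >= 1.\<close>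
definition dirichlet_inverse_of :: "(nat \<Rightarrow> real) \<Rightarrow> (nat \<Rightarrow> real) \<Rightarrow> bool" where
  "dirichlet_inverse_of f g \<longleftrightarrow>
     (\<forall>n\<ge>1. (\<Sum>d | d dvd n. f (n div d) * g d) = (if n = 1 then 1 else 0))"

definition real_zeta :: "real \<Rightarrow> real" where
  "real_zeta s = (\<Sum>n. 1 / real (Suc n) powr s)"

end

theory Submission
  imports Defs
begin

lemma zeta_summable:
  assumes "s > 1"
  shows "summable (\<lambda>n. 1 / real (Suc n) powr s)"
proof -
  have "summable (\<lambda>n. real n powr (-s))"
    using assms by (subst summable_real_powr_iff) auto
  then have "summable (\<lambda>n. real (Suc n) powr (-s))"
    by (subst summable_Suc_iff)
  then show ?thesis by (simp add: powr_minus_divide)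
qed

lemma zeta_tail:
  assumes "s > 1" "finite A" "A \<subseteq> {2..}"
  shows "(\<Sum>e\<in>A. 1 / real e powr s) \<le> real_zeta s - 1"
proof -
  define T where "T = (\<lambda>e. e - 1) ` A"
  have inj: "inj_on (\<lambda>e. e - 1) A"
    using assms(3) by (auto simp: inj_on_def)
  have "(\<Sum>e\<in>A. 1 / real e powr s) = (\<Sum>k\<in>T. 1 / real (Suc k) powr s)"
    unfolding T_def
    by (subst sum.reindex[OF inj]) (auto intro!: sum.cong simp: Suc_diff_1 dest!: subsetD[OF assms(3)])
  moreover have "0 \<notin> T" using assms(3) by (auto simp: T_def)
  moreover have "finite T" using assms(2) by (simp add: T_def)
  ultimately have eq: "(\<Sum>k\<in>insert 0 T. 1 / real (Suc k) powr s) = 1 + (\<Sum>e\<in>A. 1 / real e powr s)"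
    by simp
  have "(\<Sum>k\<in>insert 0 T. 1 / real (Suc k) powr s) \<le> real_zeta s"
    unfolding real_zeta_def
    by (rule sum_le_suminf[OF zeta_summable[OF assms(1)]]) (use \<open>finite T\<close> in auto)
  with eq show ?thesis by linarith
qed

theorem proposition3p10:
  fixes f g :: "nat \<Rightarrow> real" and C \<gamma> \<sigma> :: real
  assumes f1: "f 1 = 1"
    and inv: "dirichlet_inverse_of f g"
    and Cpos: "C > 0"
    and bound: "\<And>n. n \<ge> 2 \<Longrightarrow> \<bar>f n\<bar> \<le> C * real n powr \<gamma>"
    and sigma_gt: "\<sigma> > 1"
    and sigma_root: "real_zeta \<sigma> = 1 / C + 1"
  shows "\<forall>n\<ge>2. \<bar>g n\<bar> \<le> real n powr (\<gamma> + \<sigma>)"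
proof -
  have g1: "g 1 = 1"
  proof -
    have "{d. d dvd (1::nat)} = {1}" by auto
    moreover have "(\<Sum>d | d dvd (1::nat). f (1 div d) * g d) = 1"
      using inv unfolding dirichlet_inverse_of_def by auto
    ultimately show ?thesis using f1 by simp
  qed
  have main: "n \<ge> 1 \<Longrightarrow> \<bar>g n\<bar> \<le> real n powr (\<gamma> + \<sigma>)" for n
  proof (induction n rule: less_induct)
    case (less n)
    show ?case
    proof (cases "n = 1")
      case True then show ?thesis using g1 by simp
    next
      case False
      with less.prems have n2: "n \<ge> 2" by simp
      define D where "D = {d. d dvd n} - {n}"
      have finD: "finite D" using n2 unfolding D_def by (auto intro: finite_subset[of _ "{..n}"] dest: dvd_imp_le)
      have "{d. d dvd n} = insert n D" unfolding D_def by auto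
      moreover have "n \<notin> D" unfolding D_def by auto
      ultimately have "(\<Sum>d | d dvd n. f (n div d) * g d) = f 1 * g n + (\<Sum>d\<in>D. f (n div d) * g d)"
        using finD n2 by simp
      moreover have "(\<Sum>d | d dvd n. f (n div d) * g d) = 0"
        using inv n2 unfolding dirichlet_inverse_of_def by auto
      ultimately have gn: "g n = - (\<Sum>d\<in>D. f (n div d) * g d)" using f1 by simp
      have Dprop: "d \<in> D \<Longrightarrow> d \<ge> 1 \<and> d < n \<and> n div d \<ge> 2 \<and> real (n div d) * real d = real n" for d
      proof -
        assume "d \<in> D"
        then have dv: "d dvd n" "d \<noteq> n" unfolding D_def by auto
        have n0: "n > 0" using n2 by simp
        have "d > 0" using dv(1) n0 by (auto intro!: gr0I)
        then have d1: "d \<ge> 1" by simp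
        have "d \<le> n" using dv(1) n0 by (rule dvd_imp_le)
        then have dn: "d < n" using dv(2) by simp
        have m: "n div d * d = n" using dv by simp
        have "n div d \<ge> 2"
        proof (rule ccontr)
          assume "\<not> n div d \<ge> 2"
          then have "n div d \<le> 1" by simp
          then have "n div d * d \<le> d" by simp
          with m dn show False by simp
        qed
        moreover have "real (n div d) * real d = real n" using m by (metis of_nat_mult)
        ultimately show ?thesis using d1 dn by blast
      qed
      have tm: "\<bar>f (n div d) * g d\<bar> \<le> C * real n powr (\<gamma> + \<sigma>) * (1 / real (n div d) powr \<sigma>)"
        if "d \<in> D" for d
      proof -
        from Dprop[OF that] have d1: "d \<ge> 1" and dn: "d < n" and e2: "n div d \<ge> 2"
          and prod: "real (n div d) * real d = real n" by auto
        have "\<bar>f (n div d) * g d\<bar> = \<bar>f (n div d)\<bar> * \<bar>g d\<bar>" by (simp add: abs_mult)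
        also have "\<dots> \<le> (C * real (n div d) powr \<gamma>) * real d powr (\<gamma> + \<sigma>)"
          using bound[OF e2] less.IH[OF dn d1] by (intro mult_mono) auto
        also have "\<dots> = C * real n powr (\<gamma> + \<sigma>) * (1 / real (n div d) powr \<sigma>)"
        proof -
          have e0: "real (n div d) > 0" using e2 by simp
          have d0: "real d > 0" using d1 by simp
          have "real n powr (\<gamma> + \<sigma>) = real (n div d) powr (\<gamma> + \<sigma>) * real d powr (\<gamma> + \<sigma>)"
            using prod e0 d0 by (metis powr_mult less_imp_le)
          then show ?thesis using e0 by (simp add: powr_add field_simps)
        qed
        finally show ?thesis .
      qed
      have "\<bar>g n\<bar> \<le> (\<Sum>d\<in>D. \<bar>f (n div d) * g d\<bar>)" using gn by (simp add: sum_abs)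
      also have "\<dots> \<le> (\<Sum>d\<in>D. C * real n powr (\<gamma> + \<sigma>) * (1 / real (n div d) powr \<sigma>))"
        by (rule sum_mono) (rule tm)
      also have "\<dots> = C * real n powr (\<gamma> + \<sigma>) * (\<Sum>d\<in>D. 1 / real (n div d) powr \<sigma>)"
        by (simp add: sum_distrib_left)
      also have "(\<Sum>d\<in>D. 1 / real (n div d) powr \<sigma>) = (\<Sum>e\<in>(\<lambda>d. n div d) ` D. 1 / real e powr \<sigma>)"
      proof -
        have "inj_on (\<lambda>d. n div d) D"
        proof (rule inj_onI)
          fix x y assume "x \<in> D" "y \<in> D" "n div x = n div y"
          with Dprop[of x] Dprop[of y] show "x = y"
            by (metis nat_mult_eq_cancel_disj of_nat_mult of_nat_eq_iff not_numeral_le_zero)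
        qed
        then show ?thesis by (simp add: sum.reindex)
      qed
      also have "\<dots> \<le> real_zeta \<sigma> - 1"
        using Dprop finD by (intro zeta_tail sigma_gt) auto
      also have "real_zeta \<sigma> - 1 = 1 / C" using sigma_root by simp
      finally show ?thesis using Cpos by (simp add: mult_left_mono)
    qed
  qed
  then show ?thesis by auto
qed

end
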